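(* Let $\mathbb F$ be a field, $\mathcal A$ a commutative $\mathbb F$-algebra, $\Theta,\Sigma$ square matrices of order $m$ with entries in $\mathcal A$, and $\Xi=\mathrm{diag}(a_1,\dots,a_m)$ with $a_1,\dots,a_m\in\mathbb F$ pairwise distinct. Suppose $\Theta\Sigma=\Sigma\Xi$ and that every column of $\Sigma$ contains at least one entry which is a unit of $\mathcal A$. Then $\det\Sigma$ is a unit in $\mathcal A$. *)

theory Defs
  imports "HOL-Analysis.Analysis"
begin

text \<open>A commutative (unital) F-algebra A is given by its structure map
  phi : F -> A, a unital ring homomorphism.\<close>
definition algebra_map :: "('f::field \<Rightarrow> 'a::comm_ring_1) \<Rightarrow> bool" where
  "algebra_map phi \<longleftrightarrow> phi 1 = 1 \<and> (\<forall>x y. phi (x + y) = phi x + phi y)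
      \<and> (\<forall>x y. phi (x * y) = phi x * phi y)"

definition diag_alg :: "('f \<Rightarrow> 'a::comm_ring_1) \<Rightarrow> ('n::finite \<Rightarrow> 'f) \<Rightarrow> 'a^'n^'n" where
  "diag_alg phi a = (\<chi> i j. if i = j then phi (a i) else 0)"

end

theory Submission
  imports Defs
begin

lemma mv_scal: "(A::'a::comm_ring_1^'n::finite^'m::finite) *v (\<chi> i. p * x$i) = (\<chi> i. p * (A *v x)$i)"
  by (simp add: matrix_vector_mult_def sum_distrib_left mult_ac vec_eq_iff)

lemma mat_mv: "mat (c::'a::comm_ring_1) *v (x::'a^'n::finite) = (\<chi> i. c * x$i)"
  by (simp add: matrix_vector_mult_def mat_def vec_eq_iff if_distrib if_distribR cong del: if_weak_cong)

lemma phi_diff: assumes "algebra_map phi" shows "phi (x - y) = phi x - phi y"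
proof -
  have "phi (x - y) + phi y = phi x" using assms unfolding algebra_map_def
    by (metis diff_add_cancel)
  thus ?thesis by (simp add: eq_diff_eq)
qed

lemma phi_mult: assumes "algebra_map phi" shows "phi (x * y) = phi x * phi y"
  using assms unfolding algebra_map_def by blast

lemma phi_prod_list: assumes "algebra_map phi" shows "phi (prod_list xs) = prod_list (map phi xs)"
  using assms by (induction xs) (auto simp: algebra_map_def)

definition Mlist :: "'a::comm_ring_1^'n::finite^'n \<Rightarrow> ('f \<Rightarrow> 'a) \<Rightarrow> ('n \<Rightarrow> 'f) \<Rightarrow> 'n list \<Rightarrow> 'a^'n^'n" where
  "Mlist Theta phi a xs = foldr (\<lambda>k M. (Theta - mat (phi (a k))) ** M) xs (mat 1)"

lemma Mlist_eig:
  fixes phi :: "'f::field \<Rightarrow> 'a::comm_ring_1"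
  assumes ph: "algebra_map phi" and eig: "Theta *v s = (\<chi> i. phi c * s$i)"
  shows "Mlist Theta phi a xs *v s = (\<chi> i. phi (\<Prod>k\<leftarrow>xs. c - a k) * s$i)"
proof (induction xs)
  case Nil
  then show ?case using ph by (simp add: Mlist_def algebra_map_def vec_eq_iff)
next
  case (Cons k xs)
  have "Mlist Theta phi a (k # xs) *v s = (Theta - mat (phi (a k))) *v (Mlist Theta phi a xs *v s)"
    by (simp add: Mlist_def matrix_vector_mul_assoc)
  also have "\<dots> = (\<chi> i. phi (\<Prod>k\<leftarrow>xs. c - a k) * (phi c * s$i - phi (a k) * s$i))"
    unfolding Cons matrix_vector_mult_diff_rdistrib mv_scal eig mat_mv by (simp add: vec_eq_iff algebra_simps)
  also have "\<dots> = (\<chi> i. phi (\<Prod>k\<leftarrow>k # xs. c - a k) * s$i)"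
    using ph by (simp add: phi_mult phi_diff vec_eq_iff algebra_simps)
  finally show ?case .
qed

theorem mainTheorem8:
  fixes phi :: "'f::field \<Rightarrow> 'a::comm_ring_1"
    and Theta Sigma :: "'a^'n::finite^'n"
    and a :: "'n \<Rightarrow> 'f"
  assumes "algebra_map phi"
    and "inj a"
    and "Theta ** Sigma = Sigma ** diag_alg phi a"
    and "\<forall>j. \<exists>i. Sigma $ i $ j dvd 1"
  shows "det Sigma dvd 1"
proof -
  note ph = assms(1)
  define s where "s l = column l Sigma" for l
  have eig: "Theta *v s l = (\<chi> i. phi (a l) * s l $ i)" for l
  proof -
    have "(Theta *v s l) $ i = (Theta ** Sigma) $ i $ l" for i
      by (simp add: s_def column_def matrix_vector_mult_def matrix_matrix_mult_def)
    moreover have "(Sigma ** diag_alg phi a) $ i $ l = phi (a l) * s l $ i" for i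
      by (simp add: s_def column_def matrix_matrix_mult_def diag_alg_def if_distrib if_distribR mult.commute cong del: if_weak_cong)
    ultimately show ?thesis using assms(3) by (simp add: vec_eq_iff)
  qed
  obtain r where r: "Sigma $ r j $ j dvd 1" for j using assms(4) by metis
  have "\<forall>j. \<exists>w. Sigma $ r j $ j * w = 1" using r by (metis dvdE)
  then obtain v where v: "Sigma $ r j $ j * v j = 1" for j by (rule choice[THEN exE]) blast
  define xs where "xs j = (SOME xs. distinct xs \<and> set xs = UNIV - {j})" for j :: 'n
  have xs: "distinct (xs j) \<and> set (xs j) = UNIV - {j}" for j
    unfolding xs_def by (rule someI_ex) (use finite_distinct_list[of "UNIV - {j}"] in \<open>auto simp: finite_UNIV\<close>)
  define c where "c j = (\<Prod>k\<leftarrow>xs j. a j - a k)" for j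
  have c0: "c j \<noteq> 0" for j
  proof
    assume "c j = 0"
    then obtain k where k: "k \<in> set (xs j)" "a j - a k = 0"
      unfolding c_def prod_list_zero_iff by auto
    then have "a j = a k" by simp
    then have "j = k" using assms(2) by (simp add: inj_eq)
    then show False using k(1) xs[of j] by blast
  qed
  have cl: "(\<Prod>k\<leftarrow>xs j. a l - a k) = 0" if "l \<noteq> j" for j l
  proof -
    have "l \<in> set (xs j)" using xs[of j] that by blast
    then have "(0::'f) \<in> set (map (\<lambda>k. a l - a k) (xs j))" by force
    then show ?thesis by (simp only: prod_list_zero_iff)
  qed
  define M where "M j = Mlist Theta phi a (xs j)" for j
  have Ms: "M j *v s l = (\<chi> i. phi (\<Prod>k\<leftarrow>xs j. a l - a k) * s l $ i)" for j l
    unfolding M_def by (rule Mlist_eig[OF ph eig])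
  have phi0: "phi 0 = 0"
  proof -
    have "phi 0 + phi 0 = phi 0" using ph unfolding algebra_map_def by (metis add_0)
    thus ?thesis by simp
  qed
  have phiinv: "phi (inverse (c j)) * phi (c j) = 1" for j
  proof -
    have "phi (inverse (c j)) * phi (c j) = phi (inverse (c j) * c j)" by (rule phi_mult[OF ph, symmetric])
    thus ?thesis using c0[of j] ph by (simp add: algebra_map_def)
  qed
  define B where "B = (\<chi> j k. v j * phi (inverse (c j)) * M j $ r j $ k)"
  have "B ** Sigma = mat 1"
  proof -
    have "(B ** Sigma) $ j $ l = v j * phi (inverse (c j)) * (M j *v s l) $ r j" for j l
      by (simp add: B_def matrix_matrix_mult_def matrix_vector_mult_def s_def column_def sum_distrib_left mult_ac)
    also have "v j * phi (inverse (c j)) * (M j *v s l) $ r j = (if j = l then 1 else 0)" for j l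
    proof (cases "j = l")
      case True
      have "v j * phi (inverse (c j)) * (M j *v s l) $ r j
          = (Sigma $ r j $ j * v j) * (phi (inverse (c j)) * phi (c j))"
        unfolding Ms using True by (simp add: c_def s_def column_def mult_ac)
      then show ?thesis using True v phiinv by simp
    next
      case False
      then show ?thesis by (simp add: Ms cl[of l j] phi0)
    qed
    finally show ?thesis by (simp add: vec_eq_iff mat_def)
  qed
  then have "det B * det Sigma = 1" by (metis det_mul det_I)
  then show ?thesis by (metis dvdI mult.commute)
qed

end
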